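(* Let $H$ be a finite dimensional Hopf algebra over a field $k$. The following are equivalent: (a) (ITG) $\epsilon(\textstyle\int^r)\neq0$; (b) (Cond1); (c) (Cond1) and (Cond2).
   Context: Here $d=0$ is the injective dimension of $H$, $k=H/\ker\epsilon$, and $\textstyle\int^r=\operatorname{Hom}_{H^{\mathrm{op}}}(k_H,H_H)$, identified with the classical right integral $\{t\in H: th=t\epsilon(h)\ \forall h\}$; it is a $1$-dimensional left $H$-module. (Cond1): the map $\operatorname{Hom}_H(\textstyle\int^r,{}_HH)\to\operatorname{Hom}_H(\textstyle\int^r,{}_Hk)$ induced by $\epsilon$ is an isomorphism. (Cond2): for every simple left $H$-module $T\not\cong\textstyle\int^r$, $\operatorname{Hom}_H(T,k)=0$. *)

theory Defs
  imports Main
begin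

text \<open>A finite dimensional Hopf algebra H over a field 'k is presented by a finite
basis indexed by the finite type 'i. Elements of H are coordinate vectors 'i \<Rightarrow> 'k,
elements of H \<otimes> H are 'i \<times> 'i \<Rightarrow> 'k.  Structure constants:
  e_a e_b = \<Sum>_l M a b l e_l,   1 = \<Sum>_l u l e_l,
  \<Delta>(e_l) = \<Sum>_{i,j} C l i j e_i \<otimes> e_j,   \<epsilon>(e_l) = ep l,   S(e_i) = \<Sum>_m S i m e_m.\<close>

definition basis_vec :: "'i \<Rightarrow> 'i \<Rightarrow> 'k::field" where
  "basis_vec a = (\<lambda>l. if l = a then 1 else 0)"

definition hmult :: "('i::finite \<Rightarrow> 'i \<Rightarrow> 'i \<Rightarrow> 'k::field) \<Rightarrow> ('i \<Rightarrow> 'k) \<Rightarrow> ('i \<Rightarrow> 'k) \<Rightarrow> ('i \<Rightarrow> 'k)" where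
  "hmult M x y = (\<lambda>l. \<Sum>i\<in>UNIV. \<Sum>j\<in>UNIV. x i * y j * M i j l)"

definition comult :: "('i::finite \<Rightarrow> 'i \<Rightarrow> 'i \<Rightarrow> 'k::field) \<Rightarrow> ('i \<Rightarrow> 'k) \<Rightarrow> ('i \<times> 'i \<Rightarrow> 'k)" where
  "comult C x = (\<lambda>(i, j). \<Sum>l\<in>UNIV. x l * C l i j)"

definition counit :: "('i::finite \<Rightarrow> 'k::field) \<Rightarrow> ('i \<Rightarrow> 'k) \<Rightarrow> 'k" where
  "counit ep x = (\<Sum>l\<in>UNIV. x l * ep l)"

definition antip :: "('i::finite \<Rightarrow> 'i \<Rightarrow> 'k::field) \<Rightarrow> ('i \<Rightarrow> 'k) \<Rightarrow> ('i \<Rightarrow> 'k)" where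
  "antip S x = (\<lambda>m. \<Sum>i\<in>UNIV. x i * S i m)"

text \<open>Multiplication of H \<otimes> H (componentwise algebra structure).\<close>
definition tmult :: "('i::finite \<Rightarrow> 'i \<Rightarrow> 'i \<Rightarrow> 'k::field) \<Rightarrow> ('i \<times> 'i \<Rightarrow> 'k) \<Rightarrow> ('i \<times> 'i \<Rightarrow> 'k) \<Rightarrow> ('i \<times> 'i \<Rightarrow> 'k)" where
  "tmult M X Y = (\<lambda>(p, q). \<Sum>i\<in>UNIV. \<Sum>j\<in>UNIV. \<Sum>i'\<in>UNIV. \<Sum>j'\<in>UNIV.
      X (i, j) * Y (i', j') * M i i' p * M j j' q)"

definition hopf_algebra ::
  "('i::finite \<Rightarrow> 'i \<Rightarrow> 'i \<Rightarrow> 'k::field) \<Rightarrow> ('i \<Rightarrow> 'k) \<Rightarrow> ('i \<Rightarrow> 'i \<Rightarrow> 'i \<Rightarrow> 'k)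
     \<Rightarrow> ('i \<Rightarrow> 'k) \<Rightarrow> ('i \<Rightarrow> 'i \<Rightarrow> 'k) \<Rightarrow> bool" where
  "hopf_algebra M u C ep S \<longleftrightarrow>
     \<comment> \<open>associative unital algebra\<close>
     (\<forall>x y z. hmult M (hmult M x y) z = hmult M x (hmult M y z)) \<and>
     (\<forall>x. hmult M u x = x \<and> hmult M x u = x) \<and>
     \<comment> \<open>coassociative counital coalgebra\<close>
     (\<forall>x. (\<lambda>(a, b, c). \<Sum>i\<in>UNIV. comult C x (i, c) * C i a b)
          = (\<lambda>(a, b, c). \<Sum>j\<in>UNIV. comult C x (a, j) * C j b c)) \<and>
     (\<forall>x. (\<lambda>j. \<Sum>i\<in>UNIV. ep i * comult C x (i, j)) = x \<and>
          (\<lambda>i. \<Sum>j\<in>UNIV. comult C x (i, j) * ep j) = x) \<and>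
     \<comment> \<open>bialgebra: \<Delta> and \<epsilon> are algebra maps\<close>
     (\<forall>x y. comult C (hmult M x y) = tmult M (comult C x) (comult C y)) \<and>
     comult C u = (\<lambda>(p, q). u p * u q) \<and>
     (\<forall>x y. counit ep (hmult M x y) = counit ep x * counit ep y) \<and>
     counit ep u = 1 \<and>
     \<comment> \<open>antipode\<close>
     (\<forall>x. (\<lambda>p. \<Sum>i\<in>UNIV. \<Sum>j\<in>UNIV. comult C x (i, j) *
              hmult M (antip S (basis_vec i)) (basis_vec j) p) = (\<lambda>p. counit ep x * u p)) \<and>
     (\<forall>x. (\<lambda>p. \<Sum>i\<in>UNIV. \<Sum>j\<in>UNIV. comult C x (i, j) *
              hmult M (basis_vec i) (antip S (basis_vec j)) p) = (\<lambda>p. counit ep x * u p))"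

definition rint :: "('i::finite \<Rightarrow> 'i \<Rightarrow> 'i \<Rightarrow> 'k::field) \<Rightarrow> ('i \<Rightarrow> 'k) \<Rightarrow> ('i \<Rightarrow> 'k) set" where
  "rint M ep = {t. \<forall>h. hmult M t h = (\<lambda>l. counit ep h * t l)}"

definition ITG :: "('i::finite \<Rightarrow> 'i \<Rightarrow> 'i \<Rightarrow> 'k::field) \<Rightarrow> ('i \<Rightarrow> 'k) \<Rightarrow> bool" where
  "ITG M ep \<longleftrightarrow> (\<exists>t\<in>rint M ep. counit ep t \<noteq> 0)"

text \<open>Hom_H(\<integral>^r, _H H): left H-linear maps \<integral>^r \<rightarrow> H (extended by 0 off \<integral>^r).\<close>
definition HomIH :: "('i::finite \<Rightarrow> 'i \<Rightarrow> 'i \<Rightarrow> 'k::field) \<Rightarrow> ('i \<Rightarrow> 'k) \<Rightarrow> (('i \<Rightarrow> 'k) \<Rightarrow> ('i \<Rightarrow> 'k)) set" where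
  "HomIH M ep = {f.
     (\<forall>x\<in>rint M ep. \<forall>y\<in>rint M ep. f (\<lambda>l. x l + y l) = (\<lambda>l. f x l + f y l)) \<and>
     (\<forall>c. \<forall>x\<in>rint M ep. f (\<lambda>l. c * x l) = (\<lambda>l. c * f x l)) \<and>
     (\<forall>h. \<forall>x\<in>rint M ep. f (hmult M h x) = hmult M h (f x)) \<and>
     (\<forall>x. x \<notin> rint M ep \<longrightarrow> f x = (\<lambda>_. 0))}"

definition HomIk :: "('i::finite \<Rightarrow> 'i \<Rightarrow> 'i \<Rightarrow> 'k::field) \<Rightarrow> ('i \<Rightarrow> 'k) \<Rightarrow> (('i \<Rightarrow> 'k) \<Rightarrow> 'k) set" where
  "HomIk M ep = {g.
     (\<forall>x\<in>rint M ep. \<forall>y\<in>rint M ep. g (\<lambda>l. x l + y l) = g x + g y) \<and>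
     (\<forall>c. \<forall>x\<in>rint M ep. g (\<lambda>l. c * x l) = c * g x) \<and>
     (\<forall>h. \<forall>x\<in>rint M ep. g (hmult M h x) = counit ep h * g x) \<and>
     (\<forall>x. x \<notin> rint M ep \<longrightarrow> g x = 0)}"

definition Cond1 :: "('i::finite \<Rightarrow> 'i \<Rightarrow> 'i \<Rightarrow> 'k::field) \<Rightarrow> ('i \<Rightarrow> 'k) \<Rightarrow> bool" where
  "Cond1 M ep \<longleftrightarrow> bij_betw (\<lambda>f x. counit ep (f x)) (HomIH M ep) (HomIk M ep)"

text \<open>Finite dimensional left H-modules: k^d (vectors nat \<Rightarrow> 'k vanishing from d on),
with H acting through matrices \<rho> i (action of the basis vector e_i).\<close>
definition mcarrier :: "nat \<Rightarrow> (nat \<Rightarrow> 'k::field) set" where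
  "mcarrier d = {v. \<forall>j\<ge>d. v j = 0}"

definition mact :: "('i::finite \<Rightarrow> nat \<Rightarrow> nat \<Rightarrow> 'k::field) \<Rightarrow> nat \<Rightarrow> ('i \<Rightarrow> 'k) \<Rightarrow> (nat \<Rightarrow> 'k) \<Rightarrow> (nat \<Rightarrow> 'k)" where
  "mact \<rho> d h v = (\<lambda>a. if a < d then \<Sum>b<d. (\<Sum>i\<in>UNIV. h i * \<rho> i a b) * v b else 0)"

definition is_hmodule :: "('i::finite \<Rightarrow> 'i \<Rightarrow> 'i \<Rightarrow> 'k::field) \<Rightarrow> ('i \<Rightarrow> 'k)
     \<Rightarrow> ('i \<Rightarrow> nat \<Rightarrow> nat \<Rightarrow> 'k) \<Rightarrow> nat \<Rightarrow> bool" where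
  "is_hmodule M u \<rho> d \<longleftrightarrow>
     (\<forall>h g. \<forall>v\<in>mcarrier d. mact \<rho> d (hmult M h g) v = mact \<rho> d h (mact \<rho> d g v)) \<and>
     (\<forall>v\<in>mcarrier d. mact \<rho> d u v = v)"

definition is_simple_hmodule :: "('i::finite \<Rightarrow> 'i \<Rightarrow> 'i \<Rightarrow> 'k::field) \<Rightarrow> ('i \<Rightarrow> 'k)
     \<Rightarrow> ('i \<Rightarrow> nat \<Rightarrow> nat \<Rightarrow> 'k) \<Rightarrow> nat \<Rightarrow> bool" where
  "is_simple_hmodule M u \<rho> d \<longleftrightarrow> is_hmodule M u \<rho> d \<and> d > 0 \<and>
     (\<forall>W. W \<subseteq> mcarrier d \<and> (\<lambda>_. 0) \<in> W \<and>
          (\<forall>v\<in>W. \<forall>w\<in>W. (\<lambda>a. v a + w a) \<in> W) \<and>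
          (\<forall>c. \<forall>v\<in>W. (\<lambda>a. c * v a) \<in> W) \<and>
          (\<forall>h. \<forall>v\<in>W. mact \<rho> d h v \<in> W)
        \<longrightarrow> W = {\<lambda>_. 0} \<or> W = mcarrier d)"

definition iso_to_rint :: "('i::finite \<Rightarrow> 'i \<Rightarrow> 'i \<Rightarrow> 'k::field) \<Rightarrow> ('i \<Rightarrow> 'k)
     \<Rightarrow> ('i \<Rightarrow> nat \<Rightarrow> nat \<Rightarrow> 'k) \<Rightarrow> nat \<Rightarrow> bool" where
  "iso_to_rint M ep \<rho> d \<longleftrightarrow> (\<exists>\<phi>. bij_betw \<phi> (mcarrier d) (rint M ep) \<and>
     (\<forall>v\<in>mcarrier d. \<forall>w\<in>mcarrier d. \<phi> (\<lambda>a. v a + w a) = (\<lambda>l. \<phi> v l + \<phi> w l)) \<and>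
     (\<forall>c. \<forall>v\<in>mcarrier d. \<phi> (\<lambda>a. c * v a) = (\<lambda>l. c * \<phi> v l)) \<and>
     (\<forall>h. \<forall>v\<in>mcarrier d. \<phi> (mact \<rho> d h v) = hmult M h (\<phi> v)))"

definition hom_to_k_zero :: "('i::finite \<Rightarrow> 'k::field) \<Rightarrow> ('i \<Rightarrow> nat \<Rightarrow> nat \<Rightarrow> 'k) \<Rightarrow> nat \<Rightarrow> bool" where
  "hom_to_k_zero ep \<rho> d \<longleftrightarrow> (\<forall>g :: (nat \<Rightarrow> 'k) \<Rightarrow> 'k.
     (\<forall>v\<in>mcarrier d. \<forall>w\<in>mcarrier d. g (\<lambda>a. v a + w a) = g v + g w) \<and>
     (\<forall>c. \<forall>v\<in>mcarrier d. g (\<lambda>a. c * v a) = c * g v) \<and>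
     (\<forall>h. \<forall>v\<in>mcarrier d. g (mact \<rho> d h v) = counit ep h * g v)
     \<longrightarrow> (\<forall>v\<in>mcarrier d. g v = 0))"

definition Cond2 :: "('i::finite \<Rightarrow> 'i \<Rightarrow> 'i \<Rightarrow> 'k::field) \<Rightarrow> ('i \<Rightarrow> 'k) \<Rightarrow> ('i \<Rightarrow> 'k) \<Rightarrow> bool" where
  "Cond2 M u ep \<longleftrightarrow> (\<forall>d (\<rho> :: 'i \<Rightarrow> nat \<Rightarrow> nat \<Rightarrow> 'k).
     is_simple_hmodule M u \<rho> d \<and> \<not> iso_to_rint M ep \<rho> d \<longrightarrow> hom_to_k_zero ep \<rho> d)"

end

theory Submission
  imports Defs "HOL-Library.Function_Algebras" "HOL-Analysis.Analysis"
begin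

definition sc :: "'k::field \<Rightarrow> ('a \<Rightarrow> 'k) \<Rightarrow> ('a \<Rightarrow> 'k)" where
  "sc c x = (\<lambda>l. c * x l)"

lemma sum_fun_apply: "(\<Sum>j\<in>A. f j) l = (\<Sum>j\<in>A. f j l)"
  by (induct A rule: infinite_finite_induct) auto

lemma sc_apply: "sc c x l = c * x l" by (simp add: sc_def)
lemma sc_sc[simp]: "sc a (sc b x) = sc (a*b) x" by (simp add: sc_def fun_eq_iff mult.assoc)
lemma sc_one[simp]: "sc 1 x = x" by (simp add: sc_def)
lemma sc_zero[simp]: "sc 0 x = 0" by (simp add: sc_def fun_eq_iff)
lemma sc_zero2[simp]: "sc c 0 = 0" by (simp add: sc_def fun_eq_iff)
lemma sc_add: "sc c (x + y) = sc c x + sc c y" by (simp add: sc_def fun_eq_iff algebra_simps)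
lemma sc_add2: "sc (a + b) x = sc a x + sc b x" by (simp add: sc_def fun_eq_iff algebra_simps)
lemma sc_sum: "sc c (\<Sum>j\<in>A. f j) = (\<Sum>j\<in>A. sc c (f j))"
  by (simp add: sc_def fun_eq_iff sum_fun_apply sum_distrib_left)
lemma sc_sum2: "sc (\<Sum>j\<in>A. f j) x = (\<Sum>j\<in>A. sc (f j) x)"
  by (simp add: sc_def fun_eq_iff sum_fun_apply sum_distrib_right)

lemma basis_apply: "basis_vec a l = (if l = a then 1 else 0)" by (simp add: basis_vec_def)

lemma vec_expand: "x = (\<Sum>p\<in>UNIV. sc (x p) (basis_vec p :: 'i::finite \<Rightarrow> 'k::field))"
  by (simp add: fun_eq_iff sum_fun_apply basis_vec_def sc_apply mult.commute[of "x _"] if_distrib cong: if_cong)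

lemma sum_delta_vec: "(\<Sum>j\<in>(UNIV::'i::finite set). sc (basis_vec d j :: 'k::field) (f j)) = f d"
proof -
  have "(\<Sum>j\<in>(UNIV::'i set). sc (basis_vec d j :: 'k) (f j)) = (\<Sum>j\<in>UNIV. if j = d then f j else 0)"
    by (rule sum.cong) (auto simp: basis_vec_def)
  then show ?thesis by simp
qed

lemma sum_delta_vec': "(\<Sum>j\<in>(UNIV::'i::finite set). sc (basis_vec j d :: 'k::field) (f j)) = f d"
proof -
  have "(\<Sum>j\<in>(UNIV::'i set). sc (basis_vec j d :: 'k) (f j)) = (\<Sum>j\<in>UNIV. if j = d then f j else 0)"
    by (rule sum.cong) (auto simp: basis_vec_def)
  then show ?thesis by simp
qed

lemma sum_delta_s: "(\<Sum>j\<in>(UNIV::'i::finite set). (basis_vec d j :: 'k::field) * (f j)) = f d"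
proof -
  have "(\<Sum>j\<in>(UNIV::'i set). (basis_vec d j :: 'k) * (f j)) = (\<Sum>j\<in>UNIV. if j = d then f j else 0)"
    by (rule sum.cong) (auto simp: basis_vec_def)
  then show ?thesis by simp
qed

lemma sum_delta_s': "(\<Sum>j\<in>(UNIV::'i::finite set). (basis_vec j d :: 'k::field) * (f j)) = f d"
proof -
  have "(\<Sum>j\<in>(UNIV::'i set). (basis_vec j d :: 'k) * (f j)) = (\<Sum>j\<in>UNIV. if j = d then f j else 0)"
    by (rule sum.cong) (auto simp: basis_vec_def)
  then show ?thesis by simp
qed

lemma sum4_swap: "(\<Sum>a\<in>A. \<Sum>b\<in>B. \<Sum>c\<in>C. \<Sum>d\<in>D. G a b c d) = (\<Sum>c\<in>C. \<Sum>d\<in>D. \<Sum>a\<in>A. \<Sum>b\<in>B. G a b c d)"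
proof -
  have "(\<Sum>a\<in>A. \<Sum>b\<in>B. \<Sum>c\<in>C. \<Sum>d\<in>D. G a b c d) = (\<Sum>a\<in>A. \<Sum>c\<in>C. \<Sum>b\<in>B. \<Sum>d\<in>D. G a b c d)"
    by (rule sum.cong[OF refl], rule sum.swap)
  also have "\<dots> = (\<Sum>c\<in>C. \<Sum>a\<in>A. \<Sum>b\<in>B. \<Sum>d\<in>D. G a b c d)" by (rule sum.swap)
  also have "\<dots> = (\<Sum>c\<in>C. \<Sum>a\<in>A. \<Sum>d\<in>D. \<Sum>b\<in>B. G a b c d)"
    by (intro sum.cong refl sum.swap)
  also have "\<dots> = (\<Sum>c\<in>C. \<Sum>d\<in>D. \<Sum>a\<in>A. \<Sum>b\<in>B. G a b c d)"
    by (intro sum.cong refl sum.swap)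
  finally show ?thesis .
qed

definition lin :: "(('i \<Rightarrow> 'k::field) \<Rightarrow> ('b \<Rightarrow> 'k)) \<Rightarrow> bool" where
  "lin f \<longleftrightarrow> (\<forall>x y. f (x + y) = f x + f y) \<and> (\<forall>c x. f (sc c x) = sc c (f x))"

lemma lin_add: "lin f \<Longrightarrow> f (x + y) = f x + f y" by (simp add: lin_def)
lemma lin_sc: "lin f \<Longrightarrow> f (sc c x) = sc c (f x)" by (simp add: lin_def)
lemma lin_zero: "lin f \<Longrightarrow> f 0 = 0"
  using lin_sc[of f 0 0] by simp
lemma lin_sum: "lin f \<Longrightarrow> f (\<Sum>j\<in>A. g j) = (\<Sum>j\<in>A. f (g j))"
  by (induct A rule: infinite_finite_induct) (auto simp: lin_zero lin_add)
lemma lin_comb: "lin f \<Longrightarrow> f (\<Sum>j\<in>A. sc (c j) (g j)) = (\<Sum>j\<in>A. sc (c j) (f (g j)))"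
  by (simp only: lin_sum lin_sc)
lemma lin_expand: "lin f \<Longrightarrow> f (x::'i::finite \<Rightarrow> 'k::field) = (\<Sum>p\<in>UNIV. sc (x p) (f (basis_vec p)))"
  by (subst vec_expand[of x]) (simp add: lin_comb)

lemma lin_id: "lin (\<lambda>x. x)" by (simp add: lin_def)
lemma lin_comp: "lin f \<Longrightarrow> lin g \<Longrightarrow> lin (\<lambda>x. f (g x))" by (simp add: lin_def)
lemma lin_scI: "lin g \<Longrightarrow> lin (\<lambda>x. sc c (g x))" by (simp add: lin_def sc_add mult.commute)
lemma lin_coord: "lin g \<Longrightarrow> lin (\<lambda>x. sc (g x k) w)"
  by (simp add: lin_def sc_add2 fun_eq_iff mult.assoc sc_apply)
lemma lin_plusI: "lin f \<Longrightarrow> lin g \<Longrightarrow> lin (\<lambda>x. f x + g x)"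
  by (simp add: lin_def sc_add algebra_simps)

definition sw :: "('i \<times> 'i \<Rightarrow> 'k::field) \<Rightarrow> ('i \<Rightarrow> 'i \<Rightarrow> ('b \<Rightarrow> 'k)) \<Rightarrow> ('b \<Rightarrow> 'k)" where
  "sw X F = (\<Sum>a\<in>UNIV. \<Sum>b\<in>UNIV. sc (X (a,b)) (F a b))"

lemma sw_lin: "lin f \<Longrightarrow> sw X (\<lambda>a b. f (F a b)) = f (sw X F)"
  by (simp only: sw_def lin_sum lin_sc)

lemma sw_comm: "sw X (\<lambda>a b. sw Y (\<lambda>c d. F a b c d)) = sw Y (\<lambda>c d. sw X (\<lambda>a b. F a b c d))"
  unfolding sw_def sc_sum sc_sc
  by (subst sum4_swap) (simp add: mult.commute)

definition bil :: "(('i \<Rightarrow> 'k::field) \<Rightarrow> ('i \<Rightarrow> 'k) \<Rightarrow> ('b \<Rightarrow> 'k)) \<Rightarrow> bool" where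
  "bil G \<longleftrightarrow> (\<forall>y. lin (\<lambda>x. G x y)) \<and> (\<forall>x. lin (\<lambda>y. G x y))"

lemma bil_expand:
  assumes "bil G"
  shows "G x y = (\<Sum>p\<in>UNIV. \<Sum>q\<in>UNIV. sc (x p * y q) (G (basis_vec p) (basis_vec (q::'i::finite))))"
proof -
  have l1: "lin (\<lambda>x. G x y)" for y using assms by (simp add: bil_def)
  have l2: "lin (\<lambda>y. G x y)" for x using assms by (simp add: bil_def)
  have "G x y = (\<Sum>p\<in>UNIV. sc (x p) (G (basis_vec p) y))"
    using lin_expand[OF l1, of x] .
  also have "\<dots> = (\<Sum>p\<in>UNIV. sc (x p) (\<Sum>q\<in>UNIV. sc (y q) (G (basis_vec p) (basis_vec q))))"
  proof -
    have "G (basis_vec p) y = (\<Sum>q\<in>UNIV. sc (y q) (G (basis_vec p) (basis_vec q)))" for p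
      by (rule lin_expand[OF l2])
    then show ?thesis by simp
  qed
  also have "\<dots> = (\<Sum>p\<in>UNIV. \<Sum>q\<in>UNIV. sc (x p * y q) (G (basis_vec p) (basis_vec (q::'i::finite))))"
    by (simp add: sc_sum)
  finally show ?thesis .
qed

lemma bilI: "(\<And>y. lin (\<lambda>x. G x y)) \<Longrightarrow> (\<And>x. lin (\<lambda>y. G x y)) \<Longrightarrow> bil G"
  by (simp add: bil_def)

lemma sw_Xsc: "sw (\<lambda>p. c * X p) F = sc c (sw X F)"
  by (simp add: sw_def sc_sum)

lemma sw_Xsum: "sw (\<lambda>p. \<Sum>j\<in>A. X j p) F = (\<Sum>j\<in>A. sw (X j) F)"
  unfolding sw_def sc_sum2
  by (subst sum.swap, rule sum.cong[OF refl], rule sum.swap)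

lemma sw_cong: "(\<And>a b. F a b = G a b) \<Longrightarrow> sw X F = sw X G" by (simp add: sw_def)

lemma sw_sum_inside: "sw X (\<lambda>a b. \<Sum>j\<in>A. F j a b) = (\<Sum>j\<in>A. sw X (F j))"
  unfolding sw_def sc_sum
  by (subst sum.swap, rule sum.cong[OF refl], rule sum.swap)

lemma sw_sc_inside: "sw X (\<lambda>a b. sc c (F a b)) = sc c (sw X F)"
  by (simp add: sw_def sc_sum mult.commute)

locale hopf =
  fixes M :: "'i::finite \<Rightarrow> 'i \<Rightarrow> 'i \<Rightarrow> 'k::field"
    and u :: "'i \<Rightarrow> 'k" and C :: "'i \<Rightarrow> 'i \<Rightarrow> 'i \<Rightarrow> 'k"
    and ep :: "'i \<Rightarrow> 'k" and S :: "'i \<Rightarrow> 'i \<Rightarrow> 'k"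
  assumes H: "hopf_algebra M u C ep S"
begin

abbreviation mul where "mul \<equiv> hmult M"
abbreviation D where "D \<equiv> comult C"
abbreviation eps where "eps \<equiv> counit ep"
abbreviation Sa where "Sa \<equiv> antip S"
abbreviation e :: "'i \<Rightarrow> 'i \<Rightarrow> 'k" where "e \<equiv> basis_vec"

lemma assoc: "mul (mul x y) z = mul x (mul y z)" using H by (simp add: hopf_algebra_def)
lemma unitL: "mul u x = x" using H by (simp add: hopf_algebra_def)
lemma unitR: "mul x u = x" using H by (simp add: hopf_algebra_def)
lemma coassoc: "(\<Sum>i\<in>UNIV. D x (i,c) * C i a b) = (\<Sum>j\<in>UNIV. D x (a,j) * C j b c)"
proof -
  have "(\<lambda>(a, b, c). \<Sum>i\<in>UNIV. D x (i, c) * C i a b) = (\<lambda>(a, b, c). \<Sum>j\<in>UNIV. D x (a, j) * C j b c)"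
    using H by (simp add: hopf_algebra_def)
  from fun_cong[OF this, of "(a,b,c)"] show ?thesis by simp
qed
lemma counitL: "(\<Sum>i\<in>UNIV. ep i * D x (i,j)) = x j"
proof -
  have "(\<lambda>j. \<Sum>i\<in>UNIV. ep i * D x (i,j)) = x" using H by (simp add: hopf_algebra_def)
  from fun_cong[OF this, of j] show ?thesis by simp
qed
lemma counitR: "(\<Sum>j\<in>UNIV. D x (i,j) * ep j) = x i"
proof -
  have "(\<lambda>i. \<Sum>j\<in>UNIV. D x (i,j) * ep j) = x" using H by (simp add: hopf_algebra_def)
  from fun_cong[OF this, of i] show ?thesis by simp
qed
lemma bialg: "D (mul x y) = tmult M (D x) (D y)" using H by (simp add: hopf_algebra_def)
lemma Du: "D u = (\<lambda>(p,q). u p * u q)" using H by (simp add: hopf_algebra_def)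
lemma eps_mul: "eps (mul x y) = eps x * eps y" using H by (simp add: hopf_algebra_def)
lemma eps_u: "eps u = 1" using H by (simp add: hopf_algebra_def)
lemma antL: "sw (D x) (\<lambda>i j. mul (Sa (e i)) (e j)) = sc (eps x) u"
proof -
  have "(\<lambda>p. \<Sum>i\<in>UNIV. \<Sum>j\<in>UNIV. D x (i, j) * mul (Sa (e i)) (e j) p) = (\<lambda>p. eps x * u p)"
    using H by (simp add: hopf_algebra_def)
  then show ?thesis by (simp add: sw_def fun_eq_iff sum_fun_apply sc_apply)
qed
lemma antR: "sw (D x) (\<lambda>i j. mul (e i) (Sa (e j))) = sc (eps x) u"
proof -
  have "(\<lambda>p. \<Sum>i\<in>UNIV. \<Sum>j\<in>UNIV. D x (i, j) * mul (e i) (Sa (e j)) p) = (\<lambda>p. eps x * u p)"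
    using H by (simp add: hopf_algebra_def)
  then show ?thesis by (simp add: sw_def fun_eq_iff sum_fun_apply sc_apply)
qed

lemma mul_basis: "mul (e a) (e b) = M a b"
proof -
  have "mul (e a) (e b) l = M a b l" for l
  proof -
    have "mul (e a) (e b) l = (\<Sum>i\<in>UNIV. \<Sum>j\<in>UNIV. e a i * (e b j * M i j l))"
      by (simp add: hmult_def mult.assoc)
    also have "\<dots> = (\<Sum>i\<in>UNIV. e a i * (\<Sum>j\<in>UNIV. e b j * M i j l))" by (simp add: sum_distrib_left)
    also have "\<dots> = (\<Sum>i\<in>UNIV. e a i * M i b l)" by (simp add: sum_delta_s)
    also have "\<dots> = M a b l" by (simp add: sum_delta_s)
    finally show ?thesis .
  qed
  then show ?thesis by auto
qed

lemma D_basis: "D (e l) (a,b) = C l a b"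
  by (simp add: comult_def sum_delta_s)

lemma lin_mul1: "lin (\<lambda>x. mul x y)"
  by (simp add: lin_def hmult_def fun_eq_iff sc_apply algebra_simps sum.distrib sum_distrib_left)
lemma lin_mul2: "lin (\<lambda>y. mul x y)"
  by (simp add: lin_def hmult_def fun_eq_iff sc_apply algebra_simps sum.distrib sum_distrib_left)
lemma lin_Sa: "lin Sa"
  by (simp add: lin_def antip_def fun_eq_iff sc_apply algebra_simps sum.distrib sum_distrib_left)
lemma lin_D: "lin D"
  by (simp add: lin_def comult_def fun_eq_iff sc_apply algebra_simps sum.distrib sum_distrib_left)

lemma lin_mulL: "lin g \<Longrightarrow> lin (\<lambda>x. mul (g x) c)"
  using lin_comp[OF lin_mul1] .
lemma lin_mulR: "lin g \<Longrightarrow> lin (\<lambda>x. mul c (g x))"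
  using lin_comp[OF lin_mul2] .
lemma lin_SaI: "lin g \<Longrightarrow> lin (\<lambda>x. Sa (g x))"
  using lin_comp[OF lin_Sa] .

lemmas lin_intros = lin_id lin_mulL lin_mulR lin_SaI lin_scI lin_coord lin_plusI

lemma eps_add: "eps (x + y) = eps x + eps y"
  by (simp add: counit_def algebra_simps sum.distrib)
lemma eps_sc: "eps (sc c x) = c * eps x"
  by (simp add: counit_def sc_apply sum_distrib_left mult.assoc)
lemma eps_sum: "eps (\<Sum>j\<in>A. f j) = (\<Sum>j\<in>A. eps (f j))"
  by (simp add: counit_def sum_fun_apply sum_distrib_right) (rule sum.swap)
lemma eps_basis: "eps (e l) = ep l"
  by (simp add: counit_def sum_delta_s)

lemma sw_D_expand: "sw (D x) F = (\<Sum>l\<in>UNIV. sc (x l) (sw (D (e l)) F))"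
proof -
  have "D x = (\<lambda>p. \<Sum>l\<in>UNIV. x l * D (e l) p)"
    by (rule ext, case_tac p) (simp add: comult_def sum_delta_s)
  then show ?thesis by (simp add: sw_Xsum sw_Xsc)
qed

lemma sw_counitL: "sw (D x) (\<lambda>a b. sc (ep a) (G b)) = (\<Sum>b\<in>UNIV. sc (x b) (G b))"
proof -
  have "sw (D x) (\<lambda>a b. sc (ep a) (G b)) = (\<Sum>a\<in>UNIV. \<Sum>b\<in>UNIV. sc (D x (a,b) * ep a) (G b))"
    by (simp add: sw_def)
  also have "\<dots> = (\<Sum>b\<in>UNIV. \<Sum>a\<in>UNIV. sc (ep a * D x (a,b)) (G b))"
    by (subst sum.swap) (simp add: mult.commute)
  also have "\<dots> = (\<Sum>b\<in>UNIV. sc (x b) (G b))"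
    by (simp add: sc_sum2[symmetric] counitL)
  finally show ?thesis .
qed

lemma sw_counitR: "sw (D x) (\<lambda>a b. sc (ep b) (G a)) = (\<Sum>a\<in>UNIV. sc (x a) (G a))"
proof -
  have "sw (D x) (\<lambda>a b. sc (ep b) (G a)) = (\<Sum>a\<in>UNIV. \<Sum>b\<in>UNIV. sc (D x (a,b) * ep b) (G a))"
    by (simp add: sw_def)
  also have "\<dots> = (\<Sum>a\<in>UNIV. sc (x a) (G a))"
    by (simp add: sc_sum2[symmetric] counitR)
  finally show ?thesis .
qed

lemma sw_coassoc:
  "sw (D x) (\<lambda>i c. sw (D (e i)) (\<lambda>a b. F a b c)) = sw (D x) (\<lambda>a j. sw (D (e j)) (\<lambda>b c. F a b c))"
proof -
  have "sw (D x) (\<lambda>i c. sw (D (e i)) (\<lambda>a b. F a b c))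
      = (\<Sum>i\<in>UNIV. \<Sum>c\<in>UNIV. \<Sum>a\<in>UNIV. \<Sum>b\<in>UNIV. sc (D x (i,c) * C i a b) (F a b c))"
    by (simp add: sw_def D_basis sc_sum)
  also have "\<dots> = (\<Sum>a\<in>UNIV. \<Sum>b\<in>UNIV. \<Sum>i\<in>UNIV. \<Sum>c\<in>UNIV. sc (D x (i,c) * C i a b) (F a b c))"
    by (rule sum4_swap)
  also have "\<dots> = (\<Sum>a\<in>UNIV. \<Sum>b\<in>UNIV. \<Sum>c\<in>UNIV. \<Sum>i\<in>UNIV. sc (D x (i,c) * C i a b) (F a b c))"
    by (intro sum.cong refl sum.swap)
  also have "\<dots> = (\<Sum>a\<in>UNIV. \<Sum>b\<in>UNIV. \<Sum>c\<in>UNIV. sc (\<Sum>j\<in>UNIV. D x (a,j) * C j b c) (F a b c))"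
    by (simp add: sc_sum2[symmetric] coassoc)
  also have "\<dots> = (\<Sum>a\<in>UNIV. \<Sum>b\<in>UNIV. \<Sum>j\<in>UNIV. \<Sum>c\<in>UNIV. sc (D x (a,j) * C j b c) (F a b c))"
    by (simp add: sc_sum2) (intro sum.cong refl sum.swap)
  also have "\<dots> = (\<Sum>a\<in>UNIV. \<Sum>j\<in>UNIV. \<Sum>b\<in>UNIV. \<Sum>c\<in>UNIV. sc (D x (a,j) * C j b c) (F a b c))"
    by (intro sum.cong refl sum.swap)
  also have "\<dots> = sw (D x) (\<lambda>a j. sw (D (e j)) (\<lambda>b c. F a b c))"
    by (simp add: sw_def D_basis sc_sum)
  finally show ?thesis .
qed

lemma sum6_swap: "(\<Sum>p\<in>P. \<Sum>q\<in>Q. \<Sum>a\<in>A. \<Sum>b\<in>B. \<Sum>c\<in>C'. \<Sum>d\<in>D'. G p q a b c d)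
   = (\<Sum>a\<in>A. \<Sum>b\<in>B. \<Sum>c\<in>C'. \<Sum>d\<in>D'. \<Sum>p\<in>P. \<Sum>q\<in>Q. G p q a b c d)"
proof -
  have "(\<Sum>p\<in>P. \<Sum>q\<in>Q. \<Sum>a\<in>A. \<Sum>b\<in>B. \<Sum>c\<in>C'. \<Sum>d\<in>D'. G p q a b c d)
      = (\<Sum>a\<in>A. \<Sum>b\<in>B. \<Sum>p\<in>P. \<Sum>q\<in>Q. \<Sum>c\<in>C'. \<Sum>d\<in>D'. G p q a b c d)"
    by (rule sum4_swap)
  also have "\<dots> = (\<Sum>a\<in>A. \<Sum>b\<in>B. \<Sum>c\<in>C'. \<Sum>d\<in>D'. \<Sum>p\<in>P. \<Sum>q\<in>Q. G p q a b c d)"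
    by (intro sum.cong refl sum4_swap)
  finally show ?thesis .
qed

lemma sw_mul:
  assumes "bil G"
  shows "sw (D (mul x y)) (\<lambda>a b. G (e a) (e b))
       = sw (D x) (\<lambda>a1 a2. sw (D y) (\<lambda>b1 b2. G (mul (e a1) (e b1)) (mul (e a2) (e b2))))"
proof -
  have "sw (D (mul x y)) (\<lambda>a b. G (e a) (e b))
      = (\<Sum>p\<in>UNIV. \<Sum>q\<in>UNIV. \<Sum>i\<in>UNIV. \<Sum>j\<in>UNIV. \<Sum>i'\<in>UNIV. \<Sum>j'\<in>UNIV.
           sc (D x (i,j) * D y (i',j') * M i i' p * M j j' q) (G (e p) (e q)))"
    by (simp add: sw_def bialg tmult_def sc_sum2)
  also have "\<dots> = (\<Sum>i\<in>UNIV. \<Sum>j\<in>UNIV. \<Sum>i'\<in>UNIV. \<Sum>j'\<in>UNIV. \<Sum>p\<in>UNIV. \<Sum>q\<in>UNIV.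
           sc (D x (i,j) * D y (i',j') * M i i' p * M j j' q) (G (e p) (e q)))"
    by (rule sum6_swap)
  also have "\<dots> = sw (D x) (\<lambda>a1 a2. sw (D y) (\<lambda>b1 b2. G (mul (e a1) (e b1)) (mul (e a2) (e b2))))"
    unfolding sw_def mul_basis
    by (subst bil_expand[OF assms]) (simp add: sc_sum mult.assoc)
  finally show ?thesis .
qed

lemma sw_unit:
  assumes "bil G"
  shows "sw (D u) (\<lambda>a b. G (e a) (e b)) = G u u"
  by (subst bil_expand[OF assms, of u u]) (simp add: sw_def Du)

end

context hopf begin

lemma lin_collapse: "lin f \<Longrightarrow> (\<Sum>p\<in>UNIV. sc (x p) (f (e p))) = f x"
  by (rule lin_expand[symmetric])

lemma bil_mulmul: "bil (\<lambda>p q. mul (mul (Sa p) q) R)"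
  by (rule bilI) (intro lin_intros)+

lemma Sa_u: "Sa u = u"
proof -
  have "sw (D u) (\<lambda>i j. mul (mul (Sa (e i)) (e j)) u) = mul (mul (Sa u) u) u"
    using sw_unit[OF bil_mulmul[of u]] .
  then have "sw (D u) (\<lambda>i j. mul (Sa (e i)) (e j)) = Sa u" by (simp add: unitR)
  then show ?thesis using antL[of u] by (simp add: eps_u)
qed

lemma eps_sw: "eps (sw X F) = (\<Sum>a\<in>UNIV. \<Sum>b\<in>UNIV. X (a,b) * eps (F a b))"
  by (simp add: sw_def eps_sum eps_sc)

lemma eps_Sa: "eps (Sa x) = eps x"
proof -
  have "eps (sw (D x) (\<lambda>i j. mul (Sa (e i)) (e j))) = eps x"
    using antL[of x] by (simp add: eps_sc eps_u)
  moreover have "eps (sw (D x) (\<lambda>i j. mul (Sa (e i)) (e j)))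
     = (\<Sum>a\<in>UNIV. \<Sum>b\<in>UNIV. D x (a,b) * (eps (Sa (e a)) * ep b))"
    by (simp add: eps_sw eps_mul eps_basis)
  moreover have "\<dots> = (\<Sum>a\<in>UNIV. (\<Sum>b\<in>UNIV. D x (a,b) * ep b) * eps (Sa (e a)))"
    by (rule sum.cong[OF refl]) (simp add: sum_distrib_left sum_distrib_right mult_ac)
  moreover have "\<dots> = eps (Sa x)"
  proof -
    have "Sa x = (\<Sum>a\<in>UNIV. sc (x a) (Sa (e a)))" by (rule lin_expand[OF lin_Sa])
    then show ?thesis by (simp add: counitR eps_sum eps_sc)
  qed
  ultimately show ?thesis by simp
qed

lemma eps_SaSa: "eps (Sa (Sa x)) = eps x" by (simp add: eps_Sa)

lemma eps_e_mul: "eps (mul (e i) (e j)) = ep i * ep j"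
  by (simp add: eps_mul eps_basis)

lemma Sa_mul: "Sa (mul x y) = mul (Sa y) (Sa x)"
proof -
  define W where "W = (\<lambda>a1 a2 a3 b1 b2 b3. mul (mul (Sa (mul (e a1) (e b1))) (mul (e a2) (e b2)))
                                          (mul (Sa (e b3)) (Sa (e a3))))"
  define Z where "Z = sw (D x) (\<lambda>i a3. sw (D (e i)) (\<lambda>a1 a2. sw (D y) (\<lambda>j b3. sw (D (e j)) (\<lambda>b1 b2. W a1 a2 a3 b1 b2 b3))))"
  have ii1: "Z = sw (D x) (\<lambda>i a3. sw (D y) (\<lambda>j b3. sw (D (e i)) (\<lambda>a1 a2. sw (D (e j)) (\<lambda>b1 b2. W a1 a2 a3 b1 b2 b3))))"
    unfolding Z_def by (intro sw_cong sw_comm)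
  have ii2: "sw (D (e i)) (\<lambda>a1 a2. sw (D (e j)) (\<lambda>b1 b2. W a1 a2 a3 b1 b2 b3))
           = sc (ep i * ep j) (mul (Sa (e b3)) (Sa (e a3)))" for i j a3 b3
  proof -
    let ?R = "mul (Sa (e b3)) (Sa (e a3))"
    have "sw (D (e i)) (\<lambda>a1 a2. sw (D (e j)) (\<lambda>b1 b2. W a1 a2 a3 b1 b2 b3))
        = sw (D (mul (e i) (e j))) (\<lambda>p q. mul (mul (Sa (e p)) (e q)) ?R)"
      unfolding W_def by (rule sw_mul[OF bil_mulmul, symmetric])
    also have "\<dots> = mul (sw (D (mul (e i) (e j))) (\<lambda>p q. mul (Sa (e p)) (e q))) ?R"
      by (rule sw_lin[OF lin_mul1])
    also have "\<dots> = sc (ep i * ep j) ?R"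
      by (simp add: antL eps_e_mul lin_sc[OF lin_mul1] unitL)
    finally show ?thesis .
  qed
  have ii3: "Z = sw (D x) (\<lambda>i a3. sc (ep i) (sw (D y) (\<lambda>j b3. sc (ep j) (mul (Sa (e b3)) (Sa (e a3))))))"
    unfolding ii1 ii2 by (simp add: sw_sc_inside[symmetric])
  have ii4: "sw (D y) (\<lambda>j b3. sc (ep j) (mul (Sa (e b3)) (Sa (e a3)))) = mul (Sa y) (Sa (e a3))" for a3
    by (simp add: sw_counitL lin_collapse[OF lin_mulL[OF lin_Sa]])
  have ii: "Z = mul (Sa y) (Sa x)"
    unfolding ii3 ii4
    by (simp add: sw_counitL lin_collapse[OF lin_mulR[OF lin_Sa]])
  have i1: "Z = sw (D x) (\<lambda>a1 k. sw (D (e k)) (\<lambda>a2 a3. sw (D y) (\<lambda>b1 k'. sw (D (e k')) (\<lambda>b2 b3. W a1 a2 a3 b1 b2 b3))))"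
    unfolding Z_def by (simp only: sw_coassoc)
  have i2: "sw (D (e k')) (\<lambda>b2 b3. W a1 a2 a3 b1 b2 b3)
      = sc (ep k') (mul (Sa (mul (e a1) (e b1))) (mul (e a2) (Sa (e a3))))" for k' a1 a2 a3 b1
  proof -
    let ?f = "\<lambda>v. mul (Sa (mul (e a1) (e b1))) (mul (e a2) (mul v (Sa (e a3))))"
    have "sw (D (e k')) (\<lambda>b2 b3. W a1 a2 a3 b1 b2 b3) = sw (D (e k')) (\<lambda>b2 b3. ?f (mul (e b2) (Sa (e b3))))"
      unfolding W_def by (simp only: assoc)
    also have "\<dots> = ?f (sw (D (e k')) (\<lambda>b2 b3. mul (e b2) (Sa (e b3))))"
      by (rule sw_lin) (intro lin_intros)
    also have "\<dots> = ?f (sc (ep k') u)" by (simp add: antR eps_basis)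
    also have "\<dots> = sc (ep k') (?f u)" by (rule lin_sc) (intro lin_intros)
    finally show ?thesis by (simp add: unitL)
  qed
  have i3: "sw (D y) (\<lambda>b1 k'. sw (D (e k')) (\<lambda>b2 b3. W a1 a2 a3 b1 b2 b3))
      = mul (Sa (mul (e a1) y)) (mul (e a2) (Sa (e a3)))" for a1 a2 a3
    unfolding i2 sw_counitR
    by (rule lin_collapse) (intro lin_intros)
  have i4: "sw (D (e k)) (\<lambda>a2 a3. mul (Sa (mul (e a1) y)) (mul (e a2) (Sa (e a3))))
      = sc (ep k) (Sa (mul (e a1) y))" for k a1
  proof -
    have "sw (D (e k)) (\<lambda>a2 a3. mul (Sa (mul (e a1) y)) (mul (e a2) (Sa (e a3))))
       = mul (Sa (mul (e a1) y)) (sw (D (e k)) (\<lambda>a2 a3. mul (e a2) (Sa (e a3))))"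
      by (rule sw_lin[OF lin_mul2])
    also have "\<dots> = sc (ep k) (Sa (mul (e a1) y))"
      by (simp add: antR eps_basis lin_sc[OF lin_mul2] unitR)
    finally show ?thesis .
  qed
  have i: "Z = Sa (mul x y)"
    unfolding i1 i3 i4 sw_counitR
    by (rule lin_collapse) (intro lin_intros)
  from i ii show ?thesis by simp
qed

lemma SaSa_mul: "Sa (Sa (mul x y)) = mul (Sa (Sa x)) (Sa (Sa y))"
  by (simp add: Sa_mul)

end

lemma lin_sw: "(\<And>p q. lin (\<lambda>z. G z p q)) \<Longrightarrow> lin (\<lambda>z. sw X (\<lambda>p q. G z p q))"
  unfolding lin_def sw_def
  by (simp add: sc_add sum.distrib sc_sum mult.commute)

lemma lin_sumI: "(\<And>j. lin (\<lambda>z. G j z)) \<Longrightarrow> lin (\<lambda>z. \<Sum>j\<in>A. G j z)"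
  unfolding lin_def
  by (simp add: sum.distrib sc_sum)

context hopf begin

lemma lin_swD: "lin (\<lambda>z. sw (D z) F)"
  unfolding lin_def
proof (intro conjI allI)
  fix x y show "sw (D (x + y)) F = sw (D x) F + sw (D y) F"
    using lin_add[OF lin_D, of x y] by (simp add: sw_def sc_add2 sum.distrib)
next
  fix c x
  have "D (sc c x) = (\<lambda>p. c * D x p)" using lin_sc[OF lin_D, of c x] by (simp add: sc_def)
  then show "sw (D (sc c x)) F = sc c (sw (D x) F)" by (simp add: sw_Xsc)
qed

lemmas lin_intros2 = lin_intros lin_sw lin_sumI lin_swD

definition T :: "('i \<Rightarrow> 'k) \<Rightarrow> ('i \<Rightarrow> 'k)" where
  "T v = (\<Sum>i\<in>UNIV. sw (D (e i)) (\<lambda>a b. sc (mul v (Sa (Sa (e a))) i) (e b)))"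

lemma lin_T: "lin T"
  unfolding T_def[abs_def] by (intro lin_intros2)

lemma lemX:
  assumes "bil F"
  shows "sw (D h) (\<lambda>h1 j. sw (D (e j)) (\<lambda>h2 h3. F (mul (Sa (Sa (e h2))) (Sa (e h1))) (e h3))) = F u h"
proof -
  have l1: "lin (\<lambda>x. F x y)" for y using assms by (simp add: bil_def)
  have l2: "lin (\<lambda>y. F x y)" for x using assms by (simp add: bil_def)
  have "sw (D h) (\<lambda>h1 j. sw (D (e j)) (\<lambda>h2 h3. F (mul (Sa (Sa (e h2))) (Sa (e h1))) (e h3)))
      = sw (D h) (\<lambda>h1 j. sw (D (e j)) (\<lambda>h2 h3. F (Sa (mul (e h1) (Sa (e h2)))) (e h3)))"
    by (simp add: Sa_mul)
  also have "\<dots> = sw (D h) (\<lambda>i h3. sw (D (e i)) (\<lambda>h1 h2. F (Sa (mul (e h1) (Sa (e h2)))) (e h3)))"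
    by (rule sw_coassoc[symmetric])
  also have "\<dots> = sw (D h) (\<lambda>i h3. sc (ep i) (F u (e h3)))"
  proof (rule sw_cong)
    fix i h3
    have lf: "lin (\<lambda>v. F (Sa v) (e h3))" by (rule lin_comp[OF l1 lin_Sa])
    have "sw (D (e i)) (\<lambda>h1 h2. F (Sa (mul (e h1) (Sa (e h2)))) (e h3))
       = F (Sa (sw (D (e i)) (\<lambda>h1 h2. mul (e h1) (Sa (e h2))))) (e h3)"
      by (rule sw_lin[OF lf])
    also have "\<dots> = F (Sa (sc (ep i) u)) (e h3)" by (simp add: antR eps_basis)
    also have "\<dots> = sc (ep i) (F u (e h3))" using lin_sc[OF lf, of "ep i" u] by (simp add: Sa_u)
    finally show "sw (D (e i)) (\<lambda>h1 h2. F (Sa (mul (e h1) (Sa (e h2)))) (e h3)) = sc (ep i) (F u (e h3))" .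
  qed
  also have "\<dots> = F u h" by (simp add: sw_counitL lin_collapse[OF l2])
  finally show ?thesis .
qed

lemma lemY:
  assumes "bil F"
  shows "sw (D w) (\<lambda>w1 j. sw (D (e j)) (\<lambda>w2 w3. F (mul (e w1) (Sa (e w2))) (e w3))) = F u w"
proof -
  have l1: "lin (\<lambda>x. F x y)" for y using assms by (simp add: bil_def)
  have l2: "lin (\<lambda>y. F x y)" for x using assms by (simp add: bil_def)
  have "sw (D w) (\<lambda>w1 j. sw (D (e j)) (\<lambda>w2 w3. F (mul (e w1) (Sa (e w2))) (e w3)))
      = sw (D w) (\<lambda>i w3. sw (D (e i)) (\<lambda>w1 w2. F (mul (e w1) (Sa (e w2))) (e w3)))"
    by (rule sw_coassoc[symmetric])
  also have "\<dots> = sw (D w) (\<lambda>i w3. sc (ep i) (F u (e w3)))"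
  proof (rule sw_cong)
    fix i w3
    have "sw (D (e i)) (\<lambda>w1 w2. F (mul (e w1) (Sa (e w2))) (e w3))
       = F (sw (D (e i)) (\<lambda>w1 w2. mul (e w1) (Sa (e w2)))) (e w3)"
      by (rule sw_lin[OF l1])
    also have "\<dots> = F (sc (ep i) u) (e w3)" by (simp add: antR eps_basis)
    also have "\<dots> = sc (ep i) (F u (e w3))" using lin_sc[OF l1, of "ep i" u] by simp
    finally show "sw (D (e i)) (\<lambda>w1 w2. F (mul (e w1) (Sa (e w2))) (e w3)) = sc (ep i) (F u (e w3))" .
  qed
  also have "\<dots> = F u w" by (simp add: sw_counitL lin_collapse[OF l2])
  finally show ?thesis .
qed

end

context hopf begin

lemma TT:
  "(\<Sum>i\<in>UNIV. sw (D (mul (e i) w)) (\<lambda>p q. sc ((mul (mul v (Sa (Sa (e p)))) g) i) (e q)))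
   = (\<Sum>k\<in>UNIV. sw (D (mul (mul (e k) g) w)) (\<lambda>p q. sc ((mul v (Sa (Sa (e p)))) k) (e q)))"
proof -
  let ?Y = "\<lambda>p. mul v (Sa (Sa (e p)))"
  have co0: "(mul Y g) i = (\<Sum>k\<in>UNIV. Y k * (mul (e k) g) i)" for Y i
  proof -
    have "mul Y g = (\<Sum>k\<in>UNIV. sc (Y k) (mul (e k) g))" by (rule lin_expand[OF lin_mul1])
    then have "mul Y g i = (\<Sum>k\<in>UNIV. sc (Y k) (mul (e k) g)) i" by (rule fun_cong)
    then show ?thesis by (simp only: sum_fun_apply sc_apply)
  qed
  have co: "(mul (?Y p) g) i = (\<Sum>k\<in>UNIV. ?Y p k * (mul (e k) g) i)" for p i by (rule co0)
  have "(\<Sum>i\<in>UNIV. sw (D (mul (e i) w)) (\<lambda>p q. sc ((mul (?Y p) g) i) (e q)))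
      = (\<Sum>i\<in>UNIV. sw (D (mul (e i) w)) (\<lambda>p q. \<Sum>k\<in>UNIV. sc ((mul (e k) g) i) (sc (?Y p k) (e q))))"
    by (simp only: co sc_sum2 sc_sc mult.commute)
  also have "\<dots> = (\<Sum>i\<in>UNIV. \<Sum>k\<in>UNIV. sc ((mul (e k) g) i) (sw (D (mul (e i) w)) (\<lambda>p q. sc (?Y p k) (e q))))"
    by (simp only: sw_sum_inside sc_sc[symmetric] sw_sc_inside)
  also have "\<dots> = (\<Sum>k\<in>UNIV. \<Sum>i\<in>UNIV. sc ((mul (e k) g) i) (sw (D (mul (e i) w)) (\<lambda>p q. sc (?Y p k) (e q))))"
    by (rule sum.swap)
  also have "\<dots> = (\<Sum>k\<in>UNIV. sw (D (mul (mul (e k) g) w)) (\<lambda>p q. sc (?Y p k) (e q)))"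
  proof (rule sum.cong[OF refl])
    fix k
    have lf: "lin (\<lambda>z. sw (D (mul z w)) (\<lambda>p q. sc (?Y p k) (e q)))"
      by (rule lin_comp[OF lin_swD lin_mul1])
    show "(\<Sum>i\<in>UNIV. sc ((mul (e k) g) i) (sw (D (mul (e i) w)) (\<lambda>p q. sc (?Y p k) (e q))))
        = sw (D (mul (mul (e k) g) w)) (\<lambda>p q. sc (?Y p k) (e q))"
      by (rule lin_collapse[OF lf])
  qed
  finally show ?thesis .
qed

lemma claimA: "mul (T v) h = sc (eps h) (T v)"
proof -
  define G where "G = (\<lambda>i h1 p q. sc ((mul (mul v (Sa (Sa p))) (Sa (e h1))) i) (q::'i \<Rightarrow> 'k))"
  have bG: "bil (G i h1)" for i h1 unfolding G_def by (rule bilI) (intro lin_intros)+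
  have s0: "mul (T v) h = (\<Sum>i\<in>UNIV. sw (D (e i)) (\<lambda>a b. sc (mul v (Sa (Sa (e a))) i) (mul (e b) h)))"
    unfolding T_def
    by (simp add: lin_sum[OF lin_mul1] sw_lin[OF lin_mul1, symmetric] lin_sc[OF lin_mul1])
  have s1: "sc (mul v (Sa (Sa (e a))) i) (mul (e b) h)
     = sw (D h) (\<lambda>h1 j. sw (D (e j)) (\<lambda>h2 h3. G i h1 (mul (e a) (e h2)) (mul (e b) (e h3))))" for a b i
  proof -
    let ?F = "\<lambda>p q. sc (mul (mul v (Sa (Sa (e a)))) p i) (mul (e b) q)"
    have bF: "bil ?F" by (rule bilI) (intro lin_intros)+
    have "sw (D h) (\<lambda>h1 j. sw (D (e j)) (\<lambda>h2 h3. ?F (mul (Sa (Sa (e h2))) (Sa (e h1))) (e h3))) = ?F u h"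
      by (rule lemX[OF bF])
    then show ?thesis by (simp add: G_def unitR SaSa_mul assoc)
  qed
  have s2: "mul (T v) h = sw (D h) (\<lambda>h1 j. \<Sum>i\<in>UNIV. sw (D (mul (e i) (e j))) (\<lambda>p q. G i h1 (e p) (e q)))"
  proof -
    have "mul (T v) h = (\<Sum>i\<in>UNIV. sw (D (e i)) (\<lambda>a b. sw (D h) (\<lambda>h1 j. sw (D (e j)) (\<lambda>h2 h3. G i h1 (mul (e a) (e h2)) (mul (e b) (e h3))))))"
      unfolding s0 s1 ..
    also have "\<dots> = (\<Sum>i\<in>UNIV. sw (D h) (\<lambda>h1 j. sw (D (e i)) (\<lambda>a b. sw (D (e j)) (\<lambda>h2 h3. G i h1 (mul (e a) (e h2)) (mul (e b) (e h3))))))"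
      by (rule sum.cong[OF refl], rule sw_comm)
    also have "\<dots> = (\<Sum>i\<in>UNIV. sw (D h) (\<lambda>h1 j. sw (D (mul (e i) (e j))) (\<lambda>p q. G i h1 (e p) (e q))))"
      by (rule sum.cong[OF refl], rule sw_cong, rule sw_mul[OF bG, symmetric])
    also have "\<dots> = sw (D h) (\<lambda>h1 j. \<Sum>i\<in>UNIV. sw (D (mul (e i) (e j))) (\<lambda>p q. G i h1 (e p) (e q)))"
      by (rule sw_sum_inside[symmetric])
    finally show ?thesis .
  qed
  define Psi where "Psi = (\<lambda>k z. sw (D (mul (e k) z)) (\<lambda>p q. sc ((mul v (Sa (Sa (e p)))) k) (e q)))"
  have lPsi: "lin (Psi k)" for k unfolding Psi_def by (rule lin_comp[OF lin_swD lin_mul2])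
  have s3: "mul (T v) h = sw (D h) (\<lambda>h1 j. \<Sum>k\<in>UNIV. Psi k (mul (Sa (e h1)) (e j)))"
    unfolding s2 G_def Psi_def
    by (rule sw_cong) (simp only: TT, simp only: assoc)
  also have "\<dots> = (\<Sum>k\<in>UNIV. Psi k (sw (D h) (\<lambda>h1 j. mul (Sa (e h1)) (e j))))"
    by (simp only: sw_sum_inside sw_lin[OF lPsi])
  also have "\<dots> = (\<Sum>k\<in>UNIV. sc (eps h) (Psi k u))"
    by (simp only: antL lin_sc[OF lPsi])
  also have "\<dots> = sc (eps h) (T v)"
    unfolding sc_sum[symmetric] Psi_def T_def unitR ..
  finally show ?thesis .
qed

lemma T_rint: "T v \<in> rint M ep"
  using claimA by (simp add: rint_def sc_def)

end

context hopf begin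

lemma sw_coord: "sw X F j = (\<Sum>a\<in>UNIV. \<Sum>b\<in>UNIV. X (a,b) * F a b j)"
  by (simp add: sw_def sum_fun_apply sc_apply)

lemma T_coord: "T w j = (\<Sum>i\<in>UNIV. \<Sum>c\<in>UNIV. C i c j * (mul w (Sa (Sa (e c)))) i)"
proof -
  have "T w j = (\<Sum>i\<in>UNIV. \<Sum>c\<in>UNIV. \<Sum>b\<in>UNIV. e b j * (C i c b * (mul w (Sa (Sa (e c)))) i))"
    by (simp add: T_def sum_fun_apply sw_coord D_basis sc_apply mult_ac)
  also have "\<dots> = (\<Sum>i\<in>UNIV. \<Sum>c\<in>UNIV. C i c j * (mul w (Sa (Sa (e c)))) i)"
    by (simp add: sum_delta_s')
  finally show ?thesis .
qed

lemma S3: "v = (\<Sum>j\<in>UNIV. sw (D (e j)) (\<lambda>a b. sc (T (mul v (Sa (e a))) j) (e b)))"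
proof -
  define Q where "Q = (\<lambda>a c i. (mul (mul v (Sa (e a))) (Sa (Sa (e c)))) i)"
  have "(\<Sum>j\<in>UNIV. sw (D (e j)) (\<lambda>a b. sc (T (mul v (Sa (e a))) j) (e b)))
      = (\<Sum>j\<in>UNIV. \<Sum>a\<in>UNIV. \<Sum>b\<in>UNIV. \<Sum>i\<in>UNIV. \<Sum>c\<in>UNIV. sc (C j a b * (C i c j * Q a c i)) (e b))"
    by (simp add: T_coord sw_def D_basis sc_sum2 sc_sum Q_def)
  also have "\<dots> = (\<Sum>j\<in>UNIV. \<Sum>i\<in>UNIV. \<Sum>c\<in>UNIV. \<Sum>a\<in>UNIV. \<Sum>b\<in>UNIV. sc (C j a b * (C i c j * Q a c i)) (e b))"
    by (rule sum.cong[OF refl], rule sum4_swap)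
  also have "\<dots> = (\<Sum>i\<in>UNIV. \<Sum>j\<in>UNIV. \<Sum>c\<in>UNIV. \<Sum>a\<in>UNIV. \<Sum>b\<in>UNIV. sc (C j a b * (C i c j * Q a c i)) (e b))"
    by (rule sum.swap)
  also have "\<dots> = (\<Sum>i\<in>UNIV. \<Sum>c\<in>UNIV. \<Sum>j\<in>UNIV. \<Sum>a\<in>UNIV. \<Sum>b\<in>UNIV. sc (C j a b * (C i c j * Q a c i)) (e b))"
    by (rule sum.cong[OF refl], rule sum.swap)
  also have "\<dots> = (\<Sum>i\<in>UNIV. sw (D (e i)) (\<lambda>c d. sw (D (e d)) (\<lambda>a b. sc (Q a c i) (e b))))"
    by (simp add: sw_def D_basis sc_sum mult_ac)
  also have "\<dots> = (\<Sum>i\<in>UNIV. sw (D (e i)) (\<lambda>k b. sw (D (e k)) (\<lambda>c a. sc (Q a c i) (e b))))"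
    by (rule sum.cong[OF refl], rule sw_coassoc[symmetric])
  also have "\<dots> = (\<Sum>i\<in>UNIV. sw (D (e i)) (\<lambda>k b. sc (ep k) (sc (v i) (e b))))"
  proof (rule sum.cong[OF refl], rule sw_cong)
    fix i k b
    let ?f = "\<lambda>z. sc (mul v (Sa z) i) (e b)"
    have lf: "lin ?f" by (intro lin_intros)
    have "sw (D (e k)) (\<lambda>c a. sc (Q a c i) (e b)) = sw (D (e k)) (\<lambda>c a. ?f (mul (Sa (e c)) (e a)))"
      by (simp only: Q_def Sa_mul assoc)
    also have "\<dots> = ?f (sc (ep k) u)" by (simp only: sw_lin[OF lf] antL eps_basis)
    also have "\<dots> = sc (ep k) (?f u)" by (rule lin_sc[OF lf])
    also have "\<dots> = sc (ep k) (sc (v i) (e b))" by (simp only: Sa_u unitR)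
    finally show "sw (D (e k)) (\<lambda>c a. sc (Q a c i) (e b)) = sc (ep k) (sc (v i) (e b))" .
  qed
  also have "\<dots> = (\<Sum>i\<in>UNIV. sc (v i) (e i))"
    by (simp only: sw_counitL sum_delta_vec)
  also have "\<dots> = v" by (rule vec_expand[symmetric])
  finally show ?thesis by simp
qed

end

context hopf begin

lemma rint_mul: "x \<in> rint M ep \<Longrightarrow> mul x h = sc (eps h) x"
  by (simp add: rint_def sc_def)

lemma rintI: "(\<And>h. mul x h = sc (eps h) x) \<Longrightarrow> x \<in> rint M ep"
  by (simp add: rint_def sc_def)

lemma swD_sc: "sw (D (sc c x)) F = sc c (sw (D x) F)"
  by (rule lin_sc[OF lin_swD])

lemma U1:
  assumes x: "x \<in> rint M ep"
  shows "sw (D x) (\<lambda>a b. sc ((mul w (Sa (e a))) k) (e b)) = mul (sw (D x) (\<lambda>a b. sc ((Sa (e a)) k) (e b))) w"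
proof -
  define G where "G = (\<lambda>w1 p q. sc ((mul (e w1) (Sa p)) k) (q::'i\<Rightarrow>'k))"
  have bG: "bil (G w1)" for w1 unfolding G_def by (rule bilI) (intro lin_intros)+
  have R0: "mul (sw (D x) (\<lambda>a b. sc (Sa (e a) k) (e b))) w = sw (D x) (\<lambda>a b. sc (Sa (e a) k) (mul (e b) w))"
    by (simp only: sw_lin[OF lin_mul1, symmetric] lin_sc[OF lin_mul1])
  have R1: "sc (Sa (e a) k) (mul (e b) w) = sw (D w) (\<lambda>w1 j. sw (D (e j)) (\<lambda>w2 w3. G w1 (mul (e a) (e w2)) (mul (e b) (e w3))))" for a b
  proof -
    let ?F = "\<lambda>p q. sc ((mul p (Sa (e a))) k) (mul (e b) q)"
    have bF: "bil ?F" by (rule bilI) (intro lin_intros)+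
    have "sw (D w) (\<lambda>w1 j. sw (D (e j)) (\<lambda>w2 w3. ?F (mul (e w1) (Sa (e w2))) (e w3))) = ?F u w"
      by (rule lemY[OF bF])
    then show ?thesis by (simp only: G_def Sa_mul assoc unitL)
  qed
  have "mul (sw (D x) (\<lambda>a b. sc ((Sa (e a)) k) (e b))) w
      = sw (D x) (\<lambda>a b. sw (D w) (\<lambda>w1 j. sw (D (e j)) (\<lambda>w2 w3. G w1 (mul (e a) (e w2)) (mul (e b) (e w3)))))"
    unfolding R0 R1 ..
  also have "\<dots> = sw (D w) (\<lambda>w1 j. sw (D x) (\<lambda>a b. sw (D (e j)) (\<lambda>w2 w3. G w1 (mul (e a) (e w2)) (mul (e b) (e w3)))))"
    by (rule sw_comm)
  also have "\<dots> = sw (D w) (\<lambda>w1 j. sw (D (mul x (e j))) (\<lambda>p q. G w1 (e p) (e q)))"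
    by (rule sw_cong, rule sw_mul[OF bG, symmetric])
  also have "\<dots> = sw (D w) (\<lambda>w1 j. sc (ep j) (sw (D x) (\<lambda>p q. G w1 (e p) (e q))))"
    by (simp only: rint_mul[OF x] eps_basis swD_sc)
  also have "\<dots> = (\<Sum>w1\<in>UNIV. sc (w w1) (sw (D x) (\<lambda>p q. G w1 (e p) (e q))))"
    by (rule sw_counitR)
  also have "\<dots> = sw (D x) (\<lambda>a b. sc ((mul w (Sa (e a))) k) (e b))"
    unfolding G_def by (rule lin_collapse) (intro lin_intros2)
  finally show ?thesis by simp
qed

definition Ak :: "('i \<Rightarrow> 'k) \<Rightarrow> 'i \<Rightarrow> ('i \<Rightarrow> 'k)" where
  "Ak x k = sw (D x) (\<lambda>a b. sc ((Sa (e a)) k) (e b))"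

lemma S5:
  assumes x: "x \<in> rint M ep"
  shows "T (mul (Ak x k) v) = sc (v k) x"
proof -
  define R where "R = (\<lambda>c a. (mul (mul v (Sa (Sa (e c)))) (Sa (e a))) k)"
  have c1: "(mul (mul (Ak x k) v) (Sa (Sa (e c)))) i = (\<Sum>a\<in>UNIV. D x (a,i) * R c a)" for c i
  proof -
    have "mul (mul (Ak x k) v) (Sa (Sa (e c))) = mul (Ak x k) (mul v (Sa (Sa (e c))))" by (rule assoc)
    also have "\<dots> = sw (D x) (\<lambda>a b. sc (R c a) (e b))"
      unfolding Ak_def R_def by (rule U1[OF x, symmetric])
    finally have "mul (mul (Ak x k) v) (Sa (Sa (e c))) = sw (D x) (\<lambda>a b. sc (R c a) (e b))" .
    then show ?thesis by (simp add: sw_coord sc_apply mult_ac sum_delta_s')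
  qed
  have "T (mul (Ak x k) v) = (\<Sum>i\<in>UNIV. \<Sum>c\<in>UNIV. \<Sum>d\<in>UNIV. \<Sum>a\<in>UNIV. sc (D x (a,i)) (sc (C i c d) (sc (R c a) (e d))))"
    by (simp add: T_def sw_def D_basis c1 sc_sum2 sc_sum mult_ac)
  also have "\<dots> = (\<Sum>i\<in>UNIV. \<Sum>a\<in>UNIV. \<Sum>c\<in>UNIV. \<Sum>d\<in>UNIV. sc (D x (a,i)) (sc (C i c d) (sc (R c a) (e d))))"
  proof (rule sum.cong[OF refl])
    fix i
    have "(\<Sum>c\<in>UNIV. \<Sum>d\<in>UNIV. \<Sum>a\<in>UNIV. sc (D x (a,i)) (sc (C i c d) (sc (R c a) (e d))))
        = (\<Sum>c\<in>UNIV. \<Sum>a\<in>UNIV. \<Sum>d\<in>UNIV. sc (D x (a,i)) (sc (C i c d) (sc (R c a) (e d))))"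
      by (rule sum.cong[OF refl], rule sum.swap)
    also have "\<dots> = (\<Sum>a\<in>UNIV. \<Sum>c\<in>UNIV. \<Sum>d\<in>UNIV. sc (D x (a,i)) (sc (C i c d) (sc (R c a) (e d))))"
      by (rule sum.swap)
    finally show "(\<Sum>c\<in>UNIV. \<Sum>d\<in>UNIV. \<Sum>a\<in>UNIV. sc (D x (a,i)) (sc (C i c d) (sc (R c a) (e d))))
        = (\<Sum>a\<in>UNIV. \<Sum>c\<in>UNIV. \<Sum>d\<in>UNIV. sc (D x (a,i)) (sc (C i c d) (sc (R c a) (e d))))" .
  qed
  also have "\<dots> = (\<Sum>a\<in>UNIV. \<Sum>i\<in>UNIV. \<Sum>c\<in>UNIV. \<Sum>d\<in>UNIV. sc (D x (a,i)) (sc (C i c d) (sc (R c a) (e d))))"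
    by (rule sum.swap)
  also have "\<dots> = sw (D x) (\<lambda>a i. sw (D (e i)) (\<lambda>c d. sc (R c a) (e d)))"
    by (simp only: sw_def D_basis sc_sum)
  also have "\<dots> = sw (D x) (\<lambda>j d. sw (D (e j)) (\<lambda>a c. sc (R c a) (e d)))"
    by (rule sw_coassoc[symmetric])
  also have "\<dots> = sw (D x) (\<lambda>j d. sc (ep j) (sc (v k) (e d)))"
  proof (rule sw_cong)
    fix j d
    let ?f = "\<lambda>z. sc (mul v (Sa z) k) (e d)"
    have lf: "lin ?f" by (intro lin_intros)
    have "sw (D (e j)) (\<lambda>a c. sc (R c a) (e d)) = sw (D (e j)) (\<lambda>a c. ?f (mul (e a) (Sa (e c))))"
      by (simp only: R_def Sa_mul assoc)
    also have "\<dots> = ?f (sc (ep j) u)" by (simp only: sw_lin[OF lf] antR eps_basis)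
    also have "\<dots> = sc (ep j) (?f u)" by (rule lin_sc[OF lf])
    also have "\<dots> = sc (ep j) (sc (v k) (e d))" by (simp only: Sa_u unitR)
    finally show "sw (D (e j)) (\<lambda>a c. sc (R c a) (e d)) = sc (ep j) (sc (v k) (e d))" .
  qed
  also have "\<dots> = (\<Sum>d\<in>UNIV. sc (x d) (sc (v k) (e d)))" by (rule sw_counitL)
  also have "\<dots> = sc (v k) x"
    by (subst (2) vec_expand[of x]) (simp add: sc_sum mult.commute)
  finally show ?thesis .
qed

lemma TY: assumes y: "y \<in> rint M ep" shows "T y = y"
proof -
  have "T y = (\<Sum>i\<in>UNIV. sw (D (e i)) (\<lambda>c d. sc (ep c) (sc (y i) (e d))))"
    unfolding T_def rint_mul[OF y] eps_SaSa eps_basis by (simp add: sc_apply mult.commute)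
  also have "\<dots> = (\<Sum>i\<in>UNIV. sc (y i) (e i))"
    by (simp only: sw_counitL sum_delta_vec)
  also have "\<dots> = y" by (rule vec_expand[symmetric])
  finally show ?thesis .
qed

end

context hopf begin

lemma plus_lam: "(\<lambda>l. x l + y l) = x + y" by (simp add: fun_eq_iff)
lemma sc_lam: "(\<lambda>l. c * x l) = sc c x" by (simp add: sc_def)
lemma zero_lam: "(\<lambda>_. 0) = (0::'a \<Rightarrow> 'k)" by (simp add: fun_eq_iff)

lemma rint_add: "x \<in> rint M ep \<Longrightarrow> y \<in> rint M ep \<Longrightarrow> x + y \<in> rint M ep"
  by (rule rintI) (simp add: lin_add[OF lin_mul1] rint_mul sc_add)
lemma rint_sc: "x \<in> rint M ep \<Longrightarrow> sc c x \<in> rint M ep"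
  by (rule rintI) (simp add: lin_sc[OF lin_mul1] rint_mul mult.commute)
lemma rint_zero: "0 \<in> rint M ep"
  by (rule rintI) (simp add: lin_zero[OF lin_mul1])
lemma rint_left: "x \<in> rint M ep \<Longrightarrow> mul h x \<in> rint M ep"
  by (rule rintI) (simp add: assoc rint_mul lin_sc[OF lin_mul2])

lemma eps_zero: "eps 0 = 0" by (simp add: counit_def)

lemma exists_int: "\<exists>x\<in>rint M ep. x \<noteq> 0"
proof (rule ccontr)
  assume "\<not> (\<exists>x\<in>rint M ep. x \<noteq> 0)"
  then have T0: "T w = 0" for w using T_rint by blast
  have "u = (\<Sum>j\<in>UNIV. sw (D (e j)) (\<lambda>a b. sc (T (mul u (Sa (e a))) j) (e b)))" by (rule S3)
  also have "\<dots> = 0" by (simp add: T0 sw_def)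
  finally have "u = 0" .
  then show False using eps_u eps_zero by simp
qed

lemma uniq_int:
  assumes x: "x \<in> rint M ep" "x \<noteq> 0" and y: "y \<in> rint M ep"
  shows "\<exists>c. y = sc c x"
proof -
  define L where "L = (\<lambda>\<alpha>. (\<Sum>k\<in>UNIV. sc (\<alpha> k) (Ak x k)))"
  have TL: "T (mul (L \<alpha>) v) = sc (\<Sum>k\<in>UNIV. \<alpha> k * v k) x" for \<alpha> v
  proof -
    have "T (mul (L \<alpha>) v) = (\<Sum>k\<in>UNIV. sc (\<alpha> k) (T (mul (Ak x k) v)))"
      unfolding L_def by (simp only: lin_comb[OF lin_mul1] lin_comb[OF lin_T])
    also have "\<dots> = (\<Sum>k\<in>UNIV. sc (\<alpha> k * v k) x)" by (simp add: S5[OF x(1)])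
    finally show ?thesis by (simp add: sc_sum2)
  qed
  obtain l where xl: "x l \<noteq> 0" using x(2) by (auto simp: fun_eq_iff)
  have inj: "\<alpha> = \<beta>" if "L \<alpha> = L \<beta>" for \<alpha> \<beta>
  proof
    fix j
    have "T (mul (L \<alpha>) (e j)) = T (mul (L \<beta>) (e j))" using that by simp
    then have "sc (\<alpha> j) x = sc (\<beta> j) x"
      unfolding TL by (simp add: mult.commute[of _ "e j _"] sum_delta_s)
    then have "\<alpha> j * x l = \<beta> j * x l" by (metis sc_apply)
    then show "\<alpha> j = \<beta> j" using xl by simp
  qed
  define Lv where "Lv = (\<lambda>a::'k^'i. vec_lambda (L (vec_nth a)))"
  have linLv: "Vector_Spaces.linear (*s) (*s) Lv"
    unfolding Vector_Spaces.linear_iff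
  proof (intro conjI allI)
    show "vector_space ((*s) :: 'k \<Rightarrow> 'k^'i \<Rightarrow> 'k^'i)" by (rule vec.vector_space_axioms)
    show "vector_space ((*s) :: 'k \<Rightarrow> 'k^'i \<Rightarrow> 'k^'i)" by (rule vec.vector_space_axioms)
  next
    fix a b :: "'k^'i"
    show "Lv (a + b) = Lv a + Lv b"
      by (simp add: vec_eq_iff Lv_def L_def sum_fun_apply sc_apply algebra_simps sum.distrib)
  next
    fix c and a :: "'k^'i"
    show "Lv (c *s a) = c *s Lv a"
      by (simp add: vec_eq_iff Lv_def L_def sum_fun_apply sc_apply algebra_simps sum_distrib_left)
  qed
  have "inj Lv"
  proof (rule injI)
    fix a b assume "Lv a = Lv b"
    then have "L (vec_nth a) = L (vec_nth b)" unfolding Lv_def by (metis vec_lambda_inverse UNIV_I)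
    then have "vec_nth a = vec_nth b" by (rule inj)
    then show "a = b" by (simp add: vec_eq_iff)
  qed
  then have "surj Lv" by (rule vec.linear_inj_imp_surj[OF linLv])
  then obtain a where "Lv a = vec_lambda y" by (metis surjD)
  then have La: "L (vec_nth a) = y" unfolding Lv_def by (metis vec_lambda_inverse UNIV_I)
  have "y = T y" using TY[OF y] by simp
  also have "\<dots> = T (mul (L (vec_nth a)) u)" by (simp add: La unitR)
  also have "\<dots> = sc (\<Sum>k\<in>UNIV. vec_nth a k * u k) x" by (rule TL)
  finally show ?thesis by blast
qed

end

context hopf begin

lemma HomIH_D:
  assumes "f \<in> HomIH M ep"
  shows "\<And>x y. x \<in> rint M ep \<Longrightarrow> y \<in> rint M ep \<Longrightarrow> f (x + y) = f x + f y"
    and "\<And>c x. x \<in> rint M ep \<Longrightarrow> f (sc c x) = sc c (f x)"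
    and "\<And>h x. x \<in> rint M ep \<Longrightarrow> f (mul h x) = mul h (f x)"
    and "\<And>x. x \<notin> rint M ep \<Longrightarrow> f x = 0"
  using assms unfolding HomIH_def mem_Collect_eq plus_fun_def sc_def zero_fun_def by blast+

lemma HomIk_D:
  assumes "g \<in> HomIk M ep"
  shows "\<And>x y. x \<in> rint M ep \<Longrightarrow> y \<in> rint M ep \<Longrightarrow> g (x + y) = g x + g y"
    and "\<And>c x. x \<in> rint M ep \<Longrightarrow> g (sc c x) = c * g x"
    and "\<And>h x. x \<in> rint M ep \<Longrightarrow> g (mul h x) = eps h * g x"
    and "\<And>x. x \<notin> rint M ep \<Longrightarrow> g x = 0"
  using assms unfolding HomIk_def mem_Collect_eq plus_fun_def sc_def by blast+

lemma HomIH_I: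
  assumes "\<And>x y. x \<in> rint M ep \<Longrightarrow> y \<in> rint M ep \<Longrightarrow> f (x + y) = f x + f y"
    and "\<And>c x. x \<in> rint M ep \<Longrightarrow> f (sc c x) = sc c (f x)"
    and "\<And>h x. x \<in> rint M ep \<Longrightarrow> f (mul h x) = mul h (f x)"
    and "\<And>x. x \<notin> rint M ep \<Longrightarrow> f x = 0"
  shows "f \<in> HomIH M ep"
  using assms unfolding HomIH_def mem_Collect_eq plus_fun_def sc_def zero_fun_def by blast

lemma HomIk_I:
  assumes "\<And>x y. x \<in> rint M ep \<Longrightarrow> y \<in> rint M ep \<Longrightarrow> g (x + y) = g x + g y"
    and "\<And>c x. x \<in> rint M ep \<Longrightarrow> g (sc c x) = c * g x"
    and "\<And>h x. x \<in> rint M ep \<Longrightarrow> g (mul h x) = eps h * g x"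
    and "\<And>x. x \<notin> rint M ep \<Longrightarrow> g x = 0"
  shows "g \<in> HomIk M ep"
  using assms unfolding HomIk_def mem_Collect_eq plus_fun_def sc_def by blast

lemma eps_sc': "eps (sc c x) = c * eps x" by (rule eps_sc)

lemma ITG_Cond1:
  assumes "ITG M ep" shows "Cond1 M ep"
proof -
  obtain t where t: "t \<in> rint M ep" "eps t \<noteq> 0" using assms by (auto simp: ITG_def)
  have fF: "f x = sc (eps (f t) / eps t) x" if f: "f \<in> HomIH M ep" and x: "x \<in> rint M ep" for f x
  proof -
    have "f (mul x t) = mul x (f t)" using HomIH_D(3)[OF f t(1)] .
    also have "\<dots> = sc (eps (f t)) x" by (rule rint_mul[OF x])
    finally have "sc (eps t) (f x) = sc (eps (f t)) x"
      using HomIH_D(2)[OF f x] rint_mul[OF x, of t] by simp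
    then have "eps t * f x l = eps (f t) * x l" for l by (metis sc_apply)
    then show ?thesis using t(2) by (simp add: fun_eq_iff sc_apply field_simps)
  qed
  have gF: "g x = eps x * g t / eps t" if g: "g \<in> HomIk M ep" and x: "x \<in> rint M ep" for g x
  proof -
    have "g (mul x t) = eps x * g t" using HomIk_D(3)[OF g t(1)] .
    moreover have "g (mul x t) = eps t * g x" using HomIk_D(2)[OF g x] rint_mul[OF x, of t] by simp
    ultimately show ?thesis using t(2) by (simp add: field_simps)
  qed
  let ?P = "\<lambda>f x. eps (f x)"
  have into: "?P f \<in> HomIk M ep" if f: "f \<in> HomIH M ep" for f
  proof (rule HomIk_I)
    fix x y assume "x \<in> rint M ep" "y \<in> rint M ep"
    then show "eps (f (x + y)) = eps (f x) + eps (f y)" by (simp add: HomIH_D(1)[OF f] eps_add)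
  next
    fix c x assume "x \<in> rint M ep"
    then show "eps (f (sc c x)) = c * eps (f x)" by (simp add: HomIH_D(2)[OF f] eps_sc)
  next
    fix h x assume "x \<in> rint M ep"
    then show "eps (f (mul h x)) = eps h * eps (f x)" by (simp add: HomIH_D(3)[OF f] eps_mul)
  next
    fix x assume "x \<notin> rint M ep"
    then show "eps (f x) = 0" by (simp add: HomIH_D(4)[OF f] eps_zero)
  qed
  have inj: "inj_on ?P (HomIH M ep)"
  proof (rule inj_onI)
    fix f1 f2 assume f1: "f1 \<in> HomIH M ep" and f2: "f2 \<in> HomIH M ep" and eq: "?P f1 = ?P f2"
    have "eps (f1 t) = eps (f2 t)" using fun_cong[OF eq, of t] by simp
    show "f1 = f2"
    proof
      fix x show "f1 x = f2 x"
      proof (cases "x \<in> rint M ep")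
        case True then show ?thesis using fF[OF f1 True] fF[OF f2 True] \<open>eps (f1 t) = eps (f2 t)\<close> by simp
      next
        case False then show ?thesis using HomIH_D(4)[OF f1] HomIH_D(4)[OF f2] by simp
      qed
    qed
  qed
  have onto: "HomIk M ep \<subseteq> ?P ` HomIH M ep"
  proof
    fix g assume g: "g \<in> HomIk M ep"
    define k where "k = g t / eps t"
    define f where "f = (\<lambda>x. if x \<in> rint M ep then sc k x else 0)"
    have fH: "f \<in> HomIH M ep"
    proof (rule HomIH_I)
      fix x y assume "x \<in> rint M ep" "y \<in> rint M ep"
      then show "f (x + y) = f x + f y" by (simp add: f_def rint_add sc_add)
    next
      fix c x assume "x \<in> rint M ep"
      then show "f (sc c x) = sc c (f x)" by (simp add: f_def rint_sc mult.commute)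
    next
      fix h x assume "x \<in> rint M ep"
      then show "f (mul h x) = mul h (f x)" by (simp add: f_def rint_left lin_sc[OF lin_mul2])
    next
      fix x assume "x \<notin> rint M ep"
      then show "f x = 0" by (simp add: f_def)
    qed
    have "?P f = g"
    proof
      fix x show "eps (f x) = g x"
      proof (cases "x \<in> rint M ep")
        case True then show ?thesis using gF[OF g True] by (simp add: f_def k_def eps_sc)
      next
        case False then show ?thesis using HomIk_D(4)[OF g False] by (simp add: f_def eps_zero)
      qed
    qed
    then show "g \<in> ?P ` HomIH M ep" using fH by blast
  qed
  have "bij_betw ?P (HomIH M ep) (HomIk M ep)"
    unfolding bij_betw_def using inj into onto by blast
  then show ?thesis by (simp add: Cond1_def)
qed

lemma Cond1_ITG:
  assumes "Cond1 M ep" shows "ITG M ep"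
proof (rule ccontr)
  assume nI: "\<not> ITG M ep"
  then have e0: "eps x = 0" if "x \<in> rint M ep" for x using that by (auto simp: ITG_def)
  obtain x0 where x0: "x0 \<in> rint M ep" "x0 \<noteq> 0" using exists_int by blast
  define f1 where "f1 = (\<lambda>x. if x \<in> rint M ep then x else (0::'i\<Rightarrow>'k))"
  define f0 where "f0 = (\<lambda>x::'i\<Rightarrow>'k. (0::'i\<Rightarrow>'k))"
  have f1H: "f1 \<in> HomIH M ep"
    by (rule HomIH_I) (auto simp: f1_def rint_add rint_sc rint_left)
  have f0H: "f0 \<in> HomIH M ep"
    by (rule HomIH_I) (auto simp: f0_def lin_zero[OF lin_mul2])
  have inj: "inj_on (\<lambda>f x. eps (f x)) (HomIH M ep)"
    using assms by (simp add: Cond1_def bij_betw_def)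
  have "(\<lambda>x. eps (f1 x)) = (\<lambda>x. eps (f0 x))"
    by (auto simp: fun_eq_iff f1_def f0_def e0 eps_zero)
  then have "f1 = f0" using inj_onD[OF inj _ f1H f0H] by blast
  then have "f1 x0 = f0 x0" by simp
  then show False using x0 by (simp add: f1_def f0_def)
qed

end

context hopf begin

lemma two_sided:
  assumes t: "t \<in> rint M ep" "eps t \<noteq> 0"
  shows "\<And>y. y \<in> rint M ep \<Longrightarrow> \<exists>c. y = sc c t" and "\<And>h. mul h t = sc (eps h) t"
proof -
  have t0: "t \<noteq> 0" using t(2) eps_zero by auto
  show uq: "\<exists>c. y = sc c t" if "y \<in> rint M ep" for y using uniq_int[OF t(1) t0 that] .
  fix h
  obtain c where c: "mul h t = sc c t" using uq[OF rint_left[OF t(1)]] by blast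
  have "eps h * eps t = c * eps t" using c by (metis eps_mul eps_sc)
  then have "c = eps h" using t(2) by simp
  then show "mul h t = sc (eps h) t" using c by simp
qed

lemma mc_add: "v \<in> mcarrier d \<Longrightarrow> w \<in> mcarrier d \<Longrightarrow> (\<lambda>a. v a + w a) \<in> mcarrier d"
  by (simp add: mcarrier_def)
lemma mc_sc: "v \<in> mcarrier d \<Longrightarrow> (\<lambda>a. c * v a) \<in> mcarrier d"
  by (simp add: mcarrier_def)
lemma mc_act: "mact \<rho> d h v \<in> mcarrier d"
  by (simp add: mcarrier_def mact_def)
lemma mc_zero: "(\<lambda>_. 0) \<in> mcarrier d"
  by (simp add: mcarrier_def)

lemma ITG_Cond2:
  assumes "ITG M ep" shows "Cond2 M u ep"
  unfolding Cond2_def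
proof (intro allI impI)
  fix d and \<rho> :: "'i \<Rightarrow> nat \<Rightarrow> nat \<Rightarrow> 'k"
  assume A: "is_simple_hmodule M u \<rho> d \<and> \<not> iso_to_rint M ep \<rho> d"
  obtain t where t: "t \<in> rint M ep" "eps t \<noteq> 0" using assms by (auto simp: ITG_def)
  have t0: "t \<noteq> 0" using t(2) eps_zero by auto
  then obtain l0 where l0: "t l0 \<noteq> 0" by (auto simp: fun_eq_iff)
  have simple: "\<And>W. W \<subseteq> mcarrier d \<and> (\<lambda>_. 0) \<in> W \<and>
          (\<forall>v\<in>W. \<forall>w\<in>W. (\<lambda>a. v a + w a) \<in> W) \<and>
          (\<forall>c. \<forall>v\<in>W. (\<lambda>a. c * v a) \<in> W) \<and>
          (\<forall>h. \<forall>v\<in>W. mact \<rho> d h v \<in> W)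
        \<Longrightarrow> W = {\<lambda>_. 0} \<or> W = mcarrier d"
    using A unfolding is_simple_hmodule_def by blast
  show "hom_to_k_zero ep \<rho> d"
    unfolding hom_to_k_zero_def
  proof (intro allI impI)
    fix g :: "(nat \<Rightarrow> 'k) \<Rightarrow> 'k"
    assume G: "(\<forall>v\<in>mcarrier d. \<forall>w\<in>mcarrier d. g (\<lambda>a. v a + w a) = g v + g w) \<and>
     (\<forall>c. \<forall>v\<in>mcarrier d. g (\<lambda>a. c * v a) = c * g v) \<and>
     (\<forall>h. \<forall>v\<in>mcarrier d. g (mact \<rho> d h v) = counit ep h * g v)"
    have gadd: "\<And>v w. v \<in> mcarrier d \<Longrightarrow> w \<in> mcarrier d \<Longrightarrow> g (\<lambda>a. v a + w a) = g v + g w"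
      using G by blast
    have gsc: "\<And>c v. v \<in> mcarrier d \<Longrightarrow> g (\<lambda>a. c * v a) = c * g v" using G by blast
    have gact: "\<And>h v. v \<in> mcarrier d \<Longrightarrow> g (mact \<rho> d h v) = eps h * g v" using G by blast
    show "\<forall>v\<in>mcarrier d. g v = 0"
    proof (rule ccontr)
      assume "\<not> (\<forall>v\<in>mcarrier d. g v = 0)"
      then obtain v0 where v0: "v0 \<in> mcarrier d" "g v0 \<noteq> 0" by blast
      have g0: "g (\<lambda>_. 0) = 0" using gsc[OF v0(1), of 0] by simp
      define W where "W = {v \<in> mcarrier d. g v = 0}"
      have "W = {\<lambda>_. 0} \<or> W = mcarrier d"
      proof (rule simple, intro conjI ballI allI)
        show "W \<subseteq> mcarrier d" by (auto simp: W_def)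
        show "(\<lambda>_. 0) \<in> W" by (simp add: W_def mc_zero g0)
      next
        fix v w assume "v \<in> W" "w \<in> W"
        then show "(\<lambda>a. v a + w a) \<in> W" by (simp add: W_def mc_add gadd)
      next
        fix c v assume "v \<in> W"
        then show "(\<lambda>a. c * v a) \<in> W" by (simp add: W_def mc_sc gsc)
      next
        fix h v assume "v \<in> W"
        then show "mact \<rho> d h v \<in> W" by (simp add: W_def mc_act gact)
      qed
      moreover have "W \<noteq> mcarrier d" using v0 by (auto simp: W_def)
      ultimately have W0: "W = {\<lambda>_. 0}" by blast
      have ginj: "v = w" if v: "v \<in> mcarrier d" and w: "w \<in> mcarrier d" and eq: "g v = g w" for v w
      proof -
        let ?z = "\<lambda>a. v a + (-1) * w a"
        have "g ?z = g v + g (\<lambda>a. (-1) * w a)" by (rule gadd[OF v mc_sc[OF w]])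
        also have "\<dots> = g v + (-1) * g w" by (simp only: gsc[OF w])
        finally have gz: "g ?z = g v + (-1) * g w" .
        have zmc: "?z \<in> mcarrier d" by (rule mc_add[OF v mc_sc[OF w]])
        have "?z \<in> W" unfolding W_def using zmc gz eq by simp
        then have "?z = (\<lambda>_. 0)" using W0 by blast
        then show "v = w" by (simp add: fun_eq_iff)
      qed
      define \<phi> where "\<phi> = (\<lambda>v. sc (g v) t)"
      have "iso_to_rint M ep \<rho> d"
        unfolding iso_to_rint_def
      proof (intro exI conjI ballI allI)
        show "bij_betw \<phi> (mcarrier d) (rint M ep)"
          unfolding bij_betw_def
        proof (intro conjI)
          show "inj_on \<phi> (mcarrier d)"
          proof (rule inj_onI)
            fix v w assume v: "v \<in> mcarrier d" and w: "w \<in> mcarrier d" and "\<phi> v = \<phi> w"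
            then have "g v * t l0 = g w * t l0" unfolding \<phi>_def by (metis sc_apply)
            then have "g v = g w" using l0 by simp
            then show "v = w" using ginj v w by blast
          qed
          show "\<phi> ` mcarrier d = rint M ep"
          proof
            show "\<phi> ` mcarrier d \<subseteq> rint M ep" using rint_sc[OF t(1)] by (auto simp: \<phi>_def)
            show "rint M ep \<subseteq> \<phi> ` mcarrier d"
            proof
              fix y assume "y \<in> rint M ep"
              then obtain c where c: "y = sc c t" using two_sided(1)[OF t] by blast
              let ?v = "\<lambda>a. (c / g v0) * v0 a"
              have "?v \<in> mcarrier d" by (rule mc_sc[OF v0(1)])
              moreover have "g ?v = c"
              proof -
                have "g ?v = c / g v0 * g v0" by (rule gsc[OF v0(1)])
                then show ?thesis using v0(2) by simp
              qed
              ultimately show "y \<in> \<phi> ` mcarrier d" unfolding c \<phi>_def by force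
            qed
          qed
        qed
      next
        fix v w :: "nat \<Rightarrow> 'k" assume "v \<in> mcarrier d" "w \<in> mcarrier d"
        then show "\<phi> (\<lambda>a. v a + w a) = (\<lambda>l. \<phi> v l + \<phi> w l)"
          by (simp add: \<phi>_def gadd sc_def fun_eq_iff algebra_simps)
      next
        fix c and v :: "nat \<Rightarrow> 'k" assume "v \<in> mcarrier d"
        then show "\<phi> (\<lambda>a. c * v a) = (\<lambda>l. c * \<phi> v l)"
          by (simp add: \<phi>_def gsc sc_def fun_eq_iff algebra_simps)
      next
        fix h and v :: "nat \<Rightarrow> 'k" assume v: "v \<in> mcarrier d"
        have "mul h (\<phi> v) = sc (g v) (mul h t)" unfolding \<phi>_def by (rule lin_sc[OF lin_mul2])
        also have "\<dots> = sc (g v * eps h) t" using two_sided(2)[OF t] by simp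
        finally show "\<phi> (mact \<rho> d h v) = hmult M h (\<phi> v)"
          by (simp add: \<phi>_def gact[OF v] mult.commute)
      qed
      then show False using A by blast
    qed
  qed
qed

end

theorem lemma3p5:
  fixes M :: "'i::finite \<Rightarrow> 'i \<Rightarrow> 'i \<Rightarrow> 'k::field"
    and u :: "'i \<Rightarrow> 'k" and C :: "'i \<Rightarrow> 'i \<Rightarrow> 'i \<Rightarrow> 'k"
    and ep :: "'i \<Rightarrow> 'k" and S :: "'i \<Rightarrow> 'i \<Rightarrow> 'k"
  assumes "hopf_algebra M u C ep S"
  shows "(ITG M ep \<longleftrightarrow> Cond1 M ep) \<and> (ITG M ep \<longleftrightarrow> Cond1 M ep \<and> Cond2 M u ep)"
proof -
  interpret h: hopf M u C ep S using assms by (rule hopf.intro)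
  show ?thesis using h.ITG_Cond1 h.Cond1_ITG h.ITG_Cond2 by blast
qed

end
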